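(* Let $p/q$ be a rational number with $q\in\mathbb N$, $\gcd(p,q)=1$, and let $n\in\mathbb N$ with $\gcd(n^2,q)\mid n$. Then for every $y>0$, $$\mathcal R_n\left(\tfrac pq,y\right)=\bigcup_{d\mid n}\mathcal R^{\rm pr}_{n/d}\left(x_d,\tfrac{d^2}{k^2n^2y}\right),$$ for some numbers $x_d\in\mathbb R/\mathbb Z$ depending on $d$ (and on $p,q,n$), where $k=q/\gcd(n,q)$. If moreover $\gcd(n,q)=1$, then for any integers $a,b$ with $an+bq=1$, $$\mathcal R^{\rm pr}_n\left(\tfrac pq,y\right)=\mathcal R^{\rm pr}_n\left(-\tfrac{\overline{pn}\,a}{q},\tfrac{1}{q^2n^2y}\right),$$ where $\overline{pn}$ is an integer representing the multiplicative inverse of $pn$ modulo $q$.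
   Context: $\Gamma=\mathrm{SL}_2(\mathbb Z)$, $\mathcal M=\Gamma\backslash\mathbb H$. For $n\in\mathbb N$, $x\in\mathbb R/\mathbb Z$, $y>0$: $\mathcal R_n(x,y)=\{\Gamma(x+\tfrac jn+iy):0\le j\le n-1\}$ and $\mathcal R^{\rm pr}_n(x,y)=\{\Gamma(x+\tfrac jn+iy):j\in(\mathbb Z/n\mathbb Z)^\times\}$ (for $n=1$, $(\mathbb Z/1\mathbb Z)^\times=\{0\}$). *)

theory Defs
  imports "HOL-Analysis.Analysis" "HOL-Number_Theory.Cong"
begin

definition moebius_int :: "int \<Rightarrow> int \<Rightarrow> int \<Rightarrow> int \<Rightarrow> complex \<Rightarrow> complex" where
  "moebius_int a b c d z = (of_int a * z + of_int b) / (of_int c * z + of_int d)"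

text \<open>The point \<Gamma> z of \<Gamma>\H, represented as the SL2(Z)-orbit of z.\<close>
definition SL2Z_orbit :: "complex \<Rightarrow> complex set" where
  "SL2Z_orbit z = {moebius_int a b c d z | a b c d. a * d - b * c = 1}"

definition R_set :: "nat \<Rightarrow> real \<Rightarrow> real \<Rightarrow> complex set set" where
  "R_set n x y = (\<lambda>j. SL2Z_orbit (Complex (x + real j / real n) y)) ` {0..<n}"

text \<open>R^pr_n(x,y) = {\<Gamma>(x + j/n + iy) : j \<in> (Z/nZ)^\<times>}; for n = 1 this is {0}.\<close>
definition R_pr :: "nat \<Rightarrow> real \<Rightarrow> real \<Rightarrow> complex set set" where
  "R_pr n x y = (\<lambda>j. SL2Z_orbit (Complex (x + real j / real n) y)) ` {j \<in> {0..<n}. coprime j n}"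

end

theory Submission
  imports Defs
begin


lemma denom_nz:
  assumes "Im z > 0" "a*d - b*c = (1::int)"
  shows "of_int c * z + of_int d \<noteq> (0::complex)"
proof (cases "c = 0")
  case True
  then have "d \<noteq> 0" using assms(2) by auto
  then show ?thesis using True by simp
next
  case False
  have "Im (of_int c * z + of_int d) = of_int c * Im z" by simp
  then have "Im (of_int c * z + of_int d) \<noteq> 0" using False assms(1) by simp
  then show ?thesis by force
qed

lemma moeb_comp:
  assumes "Im z > 0" "a'*d' - b'*c' = (1::int)"
  shows "moebius_int a b c d (moebius_int a' b' c' d' z) =
     moebius_int (a*a'+b*c') (a*b'+b*d') (c*a'+d*c') (c*b'+d*d') z"
proof -
  define D where "D = of_int c' * z + of_int d'"
  define N where "N = of_int a' * z + of_int b'"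
  have D: "D \<noteq> 0" using denom_nz[OF assms] D_def by simp
  have 1: "of_int a * (N/D) + of_int b = (of_int a * N + of_int b * D)/D" using D by (simp add: field_simps)
  have 2: "of_int c * (N/D) + of_int d = (of_int c * N + of_int d * D)/D" using D by (simp add: field_simps)
  have "moebius_int a b c d (moebius_int a' b' c' d' z) = (of_int a * N + of_int b * D) / (of_int c * N + of_int d * D)"
    unfolding moebius_int_def N_def[symmetric] D_def[symmetric] 1 2 using D by simp
  also have "\<dots> = moebius_int (a*a'+b*c') (a*b'+b*d') (c*a'+d*c') (c*b'+d*d') z"
    unfolding moebius_int_def N_def D_def by (simp add: algebra_simps)
  finally show ?thesis .
qed

lemma moeb_id: "moebius_int 1 0 0 1 z = z" by (simp add: moebius_int_def)

lemma orbit_sub: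
  assumes "Im z > 0" "a*d - b*c = (1::int)"
  shows "SL2Z_orbit (moebius_int a b c d z) \<subseteq> SL2Z_orbit z"
proof
  fix w assume "w \<in> SL2Z_orbit (moebius_int a b c d z)"
  then obtain a' b' c' d' where w: "w = moebius_int a' b' c' d' (moebius_int a b c d z)" "a'*d'-b'*c' = 1"
    unfolding SL2Z_orbit_def by blast
  have "w = moebius_int (a'*a+b'*c) (a'*b+b'*d) (c'*a+d'*c) (c'*b+d'*d) z"
    using w moeb_comp[OF assms] by simp
  moreover have "(a'*a+b'*c) * (c'*b+d'*d) - (a'*b+b'*d) * (c'*a+d'*c) = 1"
  proof -
    have "(a'*a+b'*c) * (c'*b+d'*d) - (a'*b+b'*d) * (c'*a+d'*c) = (a'*d'-b'*c')*(a*d-b*c)"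
      by (simp add: algebra_simps)
    then show ?thesis using w(2) assms(2) by simp
  qed
  ultimately show "w \<in> SL2Z_orbit z" unfolding SL2Z_orbit_def by blast
qed

lemma orbit_eq:
  assumes "Im z > 0" "Im w > 0" "a*d - b*c = (1::int)" "w = moebius_int a b c d z"
  shows "SL2Z_orbit w = SL2Z_orbit z"
proof
  show "SL2Z_orbit w \<subseteq> SL2Z_orbit z" using orbit_sub[OF assms(1,3)] assms(4) by simp
  have "moebius_int d (-b) (-c) a w = moebius_int 1 0 0 1 z"
    using moeb_comp[OF assms(1,3), of d "-b" "-c" a] assms(3,4) by (simp add: algebra_simps)
  then have "z = moebius_int d (-b) (-c) a w" by (simp add: moeb_id)
  moreover have "d*a - (-b)*(-c) = 1" using assms(3) by (simp add: algebra_simps)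
  ultimately show "SL2Z_orbit z \<subseteq> SL2Z_orbit w" using orbit_sub[OF assms(2)] by simp
qed

lemma orbit_shift:
  assumes "y > 0"
  shows "SL2Z_orbit (Complex (x + of_int t) y) = SL2Z_orbit (Complex x y)"
proof (rule orbit_eq[where a=1 and b=t and c=0 and d=1])
  show "Complex (x + of_int t) y = moebius_int 1 t 0 1 (Complex x y)"
    by (simp add: moebius_int_def complex_eq_iff)
next
  show "Im (Complex x y) > 0" using assms by simp
next
  show "Im (Complex (x + of_int t) y) > 0" using assms by simp
qed simp

lemma orbit_flip:
  fixes u v \<alpha> :: int
  assumes "y > 0" "v > 0" "[\<alpha>*u = -1] (mod v)"
  shows "SL2Z_orbit (Complex (of_int u / of_int v) y) =
         SL2Z_orbit (Complex (of_int \<alpha> / of_int v) (1/((of_int v)^2 * y)))"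
proof -
  from assms(3) obtain t where t: "\<alpha> * u + 1 = v * t"
    by (metis cong_iff_dvd_diff diff_minus_eq_add dvd_def)
  have det: "\<alpha> * (- u) - (- t) * v = 1" using t by (simp add: algebra_simps)
  have vz: "of_int v * Complex (of_int u / of_int v) y + of_int (-u) = Complex 0 (of_int v * y)"
    using assms(2) by (simp add: complex_eq_iff)
  have "moebius_int \<alpha> (-t) v (-u) (Complex (of_int u / of_int v) y) = Complex (of_int \<alpha> / of_int v) (1/((of_int v)^2 * y))"
  proof -
    have vy: "of_int v * y \<noteq> 0" using assms by simp
    have "of_int \<alpha> * Complex (of_int u / of_int v) y + of_int (-t) =
          Complex (of_int \<alpha> / of_int v) (1/((of_int v)^2 * y)) * Complex 0 (of_int v * y)"
    proof -
      have tt: "real_of_int t = (of_int \<alpha> * of_int u + 1)/of_int v" using t assms(2)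
        by (metis nonzero_mult_div_cancel_left of_int_0_less_iff of_int_add of_int_mult of_int_1 less_irrefl)
      show ?thesis using assms vy unfolding complex_eq_iff
        by (simp add: tt field_simps power2_eq_square)
    qed
    moreover have nz: "Complex 0 (of_int v * y) \<noteq> 0" using vy by (simp add: complex_eq_iff)
    ultimately show ?thesis unfolding moebius_int_def vz by (metis nonzero_mult_div_cancel_right)
  qed
  then show ?thesis
    by (intro orbit_eq[OF _ _ det, symmetric]) (use assms in auto)
qed



lemma classA:
  fixes K N P c d j :: int and y :: real
  assumes K: "K > 0" and N: "N > 0" and cKN: "coprime K N" and cPK: "coprime P K"
    and d: "d > 0" "d dvd N" and cP: "[c * P = - d] (mod K)" and c0: "[c = 0] (mod (N div d))"
    and y: "y > 0" and g: "gcd (P + j * K) N = d"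
  shows "\<exists>j'. 0 \<le> j' \<and> j' < N div d \<and> coprime j' (N div d) \<and>
     SL2Z_orbit (Complex (of_int (P + j * K) / of_int (K * N)) y) =
     SL2Z_orbit (Complex (of_int c / of_int (K * (N div d)) + of_int j' / of_int (N div d))
                  (1 / ((of_int (K * (N div d)))^2 * y)))"
proof -
  define M where "M = P + j * K"
  define m where "m = N div d"
  define v where "v = K * m"
  have Ndm: "N = d * m" using d unfolding m_def by simp
  have m: "m > 0" using N d Ndm by (simp add: zero_less_mult_iff)
  have v: "v > 0" using K m v_def by simp
  have "d dvd M" unfolding M_def using gcd_dvd1[of "P + j * K" N] g by simp
  then obtain u where Mu: "M = d * u" by blast
  have "gcd M N = d * gcd u m" using Mu Ndm d by (simp add: gcd_mult_left)
  then have cum: "coprime u m" using g M_def d by (simp add: coprime_iff_gcd_eq_1)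
  have "[M = P] (mod K)" unfolding M_def by (simp add: cong_iff_dvd_diff)
  then have "coprime M K" using cPK cong_imp_coprime cong_sym by blast
  then have cuK: "coprime u K" using Mu by simp
  have cuv: "coprime u v" using cum cuK v_def by (simp add: coprime_commute)
  obtain a' where a': "[u * a' = 1] (mod v)" using cong_solve_coprime_int[OF cuv] by blast
  define \<alpha> where "\<alpha> = - a'"
  have "[- (u * a') = - 1] (mod v)" using a' by (simp only: cong_minus_minus_iff)
  then have au: "[\<alpha> * u = - 1] (mod v)" unfolding \<alpha>_def by (simp add: mult.commute)
  have KN: "K * N = d * v" using Ndm v_def by simp
  have eq1: "of_int M / of_int (K * N) = (of_int u / of_int v :: real)"
    using KN Mu d by simp
  have orb1: "SL2Z_orbit (Complex (of_int M / of_int (K * N)) y) =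
       SL2Z_orbit (Complex (of_int \<alpha> / of_int v) (1/((of_int v)^2 * y)))"
    unfolding eq1 by (rule orbit_flip[OF y v au])
  have "[\<alpha> * u = -1] (mod K)" using cong_dvd_mono_modulus[OF au, of K] v_def by simp
  then have "[\<alpha> * u * d = -1 * d] (mod K)" by (rule cong_scalar_right)
  then have "[\<alpha> * M = - d] (mod K)" using Mu by (simp add: ac_simps)
  moreover have "[\<alpha> * M = \<alpha> * P] (mod K)" using \<open>[M = P] (mod K)\<close> by (rule cong_scalar_left)
  ultimately have "[\<alpha> * P = c * P] (mod K)" using cP by (meson cong_sym cong_trans)
  then have "[\<alpha> = c] (mod K)" using cPK by (simp add: cong_mult_rcancel)
  then have "K dvd \<alpha> - c" by (simp add: cong_iff_dvd_diff)
  then obtain s where s: "\<alpha> - c = K * s" by (elim dvdE)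
  define j' where "j' = s mod m"
  define t where "t = s div m"
  have st: "s = j' + m * t" unfolding j'_def t_def by simp
  have "[- (\<alpha> * u) = - (- 1)] (mod v)" using au by (simp only: cong_minus_minus_iff)
  then have "[\<alpha> * (- u) = 1] (mod v)" by simp
  then have cav: "coprime \<alpha> v" using coprime_iff_invertible_int by blast
  then have "coprime \<alpha> m" using v_def by simp
  moreover have "[\<alpha> = K * s] (mod m)"
  proof -
    have "[c + K * s = 0 + K * s] (mod N div d)" using c0 by (intro cong_add cong_refl)
    moreover have "\<alpha> = c + K * s" using s by simp
    ultimately show ?thesis by (simp add: m_def)
  qed
  ultimately have "coprime (K * s) m" using cong_imp_coprime by blast
  then have "coprime s m" by simp
  then have cj: "coprime j' m" unfolding j'_def using m by (simp add: coprime_mod_left_iff)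
  have h: "of_int \<alpha> / of_int v = (of_int c / of_int v + of_int j' / of_int m) + (of_int t :: real)"
  proof -
    have "\<alpha> = c + K * j' + v * t" using s st v_def by (simp add: algebra_simps)
    then have "(of_int \<alpha> :: real) = of_int c + of_int K * of_int j' + of_int v * of_int t" by simp
    then show ?thesis using v K m unfolding v_def by (simp add: field_simps)
  qed
  have hp: "1 / ((of_int v)^2 * y) > (0::real)" using v y by simp
  have orb2: "SL2Z_orbit (Complex (of_int M / of_int (K * N)) y) =
       SL2Z_orbit (Complex (of_int c / of_int v + of_int j' / of_int m) (1/((of_int v)^2 * y)))"
    using orb1 unfolding h orbit_shift[OF hp] .
  show ?thesis
  proof (intro exI conjI)
    show "0 \<le> j'" "j' < N div d" using m unfolding j'_def m_def by auto
    show "coprime j' (N div d)" using cj m_def by simp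
    show "SL2Z_orbit (Complex (of_int (P + j * K) / of_int (K * N)) y) =
     SL2Z_orbit (Complex (of_int c / of_int (K * (N div d)) + of_int j' / of_int (N div d))
                  (1 / ((of_int (K * (N div d)))^2 * y)))"
      using orb2 unfolding M_def m_def v_def by simp
  qed
qed



lemma classB:
  fixes K N P c d j' :: int and y :: real
  assumes K: "K > 0" and N: "N > 0" and cKN: "coprime K N" and cPK: "coprime P K"
    and d: "d > 0" "d dvd N" and cP: "[c * P = - d] (mod K)" and c0: "[c = 0] (mod (N div d))"
    and y: "y > 0" and j': "0 \<le> j'" "j' < N div d" "coprime j' (N div d)"
  shows "\<exists>j. 0 \<le> j \<and> j < N \<and> gcd (P + j * K) N = d \<and>
     SL2Z_orbit (Complex (of_int (P + j * K) / of_int (K * N)) y) =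
     SL2Z_orbit (Complex (of_int c / of_int (K * (N div d)) + of_int j' / of_int (N div d))
                  (1 / ((of_int (K * (N div d)))^2 * y)))"
proof -
  define m where "m = N div d"
  define v where "v = K * m"
  have Ndm: "N = d * m" using d unfolding m_def by simp
  have m: "m > 0" using N d Ndm by (simp add: zero_less_mult_iff)
  have v: "v > 0" using K m v_def by simp
  define \<alpha> where "\<alpha> = c + K * j'"
  have cdK: "coprime d K" using coprime_divisors[OF d(2) dvd_refl] cKN by (simp add: coprime_commute)
  have "coprime (- d) K" using cdK by simp
  then have "coprime (c * P) K" using cP cong_imp_coprime cong_sym by blast
  then have ccK: "coprime c K" by simp
  have "[\<alpha> = c] (mod K)" unfolding \<alpha>_def by (simp add: cong_iff_dvd_diff)
  then have caK: "coprime \<alpha> K" using ccK cong_imp_coprime cong_sym by blast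
  have c1: "[\<alpha> = 0 + K * j'] (mod m)" unfolding \<alpha>_def m_def using c0 by (intro cong_add cong_refl)
  have c2: "coprime (K * j') m"
  proof -
    have "coprime K m" using cKN Ndm by simp
    then show ?thesis using j'(3) m_def by simp
  qed
  have cam: "coprime \<alpha> m" using cong_imp_coprime[OF cong_sym[OF c1]] c2 by simp
  have cav: "coprime \<alpha> v" using caK cam v_def by simp
  obtain u0 where u0: "[\<alpha> * u0 = 1] (mod v)" using cong_solve_coprime_int[OF cav] by blast
  define u where "u = - u0"
  have "[- (\<alpha> * u0) = - 1] (mod v)" using u0 by (simp only: cong_minus_minus_iff)
  then have au: "[\<alpha> * u = - 1] (mod v)" unfolding u_def by simp
  have "[\<alpha> * u = -1] (mod K)" using cong_dvd_mono_modulus[OF au, of K] v_def by simp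
  moreover have "[\<alpha> * u = c * u] (mod K)" using \<open>[\<alpha> = c] (mod K)\<close> by (rule cong_scalar_right)
  ultimately have "[c * u = -1] (mod K)" using cong_trans cong_sym by blast
  then have "[c * u * P = -1 * P] (mod K)" by (rule cong_scalar_right)
  moreover have "[c * P * u = - d * u] (mod K)" using cP by (rule cong_scalar_right)
  ultimately have "[- d * u = - P] (mod K)"
  proof -
    assume X: "[c * u * P = -1 * P] (mod K)" and Y: "[c * P * u = - d * u] (mod K)"
    have "c * P * u = c * u * P" by simp
    then have X': "[c * P * u = -1 * P] (mod K)" using X by (simp only:)
    have "[- d * u = -1 * P] (mod K)" using cong_trans[OF cong_sym[OF Y] X'] .
    then show ?thesis by simp
  qed
  then have "[- (d * u) = - P] (mod K)" by simp
  then have "[d * u = P] (mod K)" by (simp only: cong_minus_minus_iff)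
  then have "K dvd d * u - P" by (simp add: cong_iff_dvd_diff)
  then obtain t where t: "d * u - P = K * t" by (elim dvdE)
  define j where "j = t mod N"
  define M where "M = P + j * K"
  define r where "r = t div N"
  have r: "t - j = N * r" unfolding j_def r_def using div_mult_mod_eq[of t N] by (simp add: algebra_simps)
  define u' where "u' = u - v * r"
  have Mu: "M = d * u'"
  proof -
    have "M = P + t * K - N * r * K" unfolding M_def using r by (simp add: algebra_simps)
    also have "\<dots> = d * u - N * r * K" using t by (simp add: algebra_simps)
    also have "\<dots> = d * u'" unfolding u'_def v_def using Ndm by (simp add: algebra_simps)
    finally show ?thesis .
  qed
  have "[u' = u] (mod v)" unfolding u'_def by (simp add: cong_iff_dvd_diff)
  then have "[\<alpha> * u' = \<alpha> * u] (mod v)" by (rule cong_scalar_left)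
  then have au': "[\<alpha> * u' = - 1] (mod v)" using au by (rule cong_trans)
  have "[- (\<alpha> * u') = - (- 1)] (mod v)" using au' by (simp only: cong_minus_minus_iff)
  then have "[u' * (- \<alpha>) = 1] (mod v)" by (simp add: mult.commute)
  then have "coprime u' v" using coprime_iff_invertible_int by blast
  then have "coprime u' m" using v_def by simp
  then have g: "gcd M N = d" using Mu Ndm d by (simp add: gcd_mult_left coprime_iff_gcd_eq_1)
  have KN: "K * N = d * v" using Ndm v_def by simp
  have eq1: "of_int M / of_int (K * N) = (of_int u' / of_int v :: real)"
    using KN Mu d by simp
  have orb1: "SL2Z_orbit (Complex (of_int M / of_int (K * N)) y) =
       SL2Z_orbit (Complex (of_int \<alpha> / of_int v) (1/((of_int v)^2 * y)))"
    unfolding eq1 by (rule orbit_flip[OF y v au'])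
  have h: "of_int \<alpha> / of_int v = (of_int c / of_int v + of_int j' / of_int m :: real)"
    unfolding \<alpha>_def v_def using K m by (simp add: field_simps)
  show ?thesis
  proof (intro exI conjI)
    show "0 \<le> j" "j < N" using N unfolding j_def by auto
    show "gcd (P + j * K) N = d" using g M_def by simp
    show "SL2Z_orbit (Complex (of_int (P + j * K) / of_int (K * N)) y) =
     SL2Z_orbit (Complex (of_int c / of_int (K * (N div d)) + of_int j' / of_int (N div d))
                  (1 / ((of_int (K * (N div d)))^2 * y)))"
      using orb1[unfolded h] unfolding M_def m_def v_def by simp
  qed
qed



lemma class_set:
  fixes K P c :: int and n dn :: nat and y :: real
  assumes K: "K > 0" and n: "n > 0" and cKN: "coprime K (int n)" and cPK: "coprime P K"
    and d: "dn > 0" "dn dvd n" and cP: "[c * P = - int dn] (mod K)" and c0: "[c = 0] (mod int (n div dn))"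
    and y: "y > 0"
  shows "(\<lambda>j. SL2Z_orbit (Complex (of_int (P + int j * K) / of_int (K * int n)) y)) `
           {j \<in> {0..<n}. gcd (P + int j * K) (int n) = int dn} =
         (\<lambda>j. SL2Z_orbit (Complex (of_int c / of_int (K * int (n div dn)) + real j / real (n div dn))
             (1 / ((of_int (K * int (n div dn)))^2 * y)))) ` {j \<in> {0..<n div dn}. coprime j (n div dn)}"
    (is "?L = ?R")
proof -
  have nd: "int n div int dn = int (n div dn)" by (simp add: zdiv_int)
  have A: "\<exists>j'. 0 \<le> j' \<and> j' < int n div int dn \<and> coprime j' (int n div int dn) \<and>
     SL2Z_orbit (Complex (of_int (P + j * K) / of_int (K * int n)) y) =
     SL2Z_orbit (Complex (of_int c / of_int (K * (int n div int dn)) + of_int j' / of_int (int n div int dn))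
                  (1 / ((of_int (K * (int n div int dn)))^2 * y)))"
    if "gcd (P + j * K) (int n) = int dn" for j
    by (rule classA) (use assms that nd in auto)
  have B: "\<exists>j. 0 \<le> j \<and> j < int n \<and> gcd (P + j * K) (int n) = int dn \<and>
     SL2Z_orbit (Complex (of_int (P + j * K) / of_int (K * int n)) y) =
     SL2Z_orbit (Complex (of_int c / of_int (K * (int n div int dn)) + of_int j' / of_int (int n div int dn))
                  (1 / ((of_int (K * (int n div int dn)))^2 * y)))"
    if "0 \<le> j'" "j' < int n div int dn" "coprime j' (int n div int dn)" for j'
    by (rule classB) (use assms that nd in auto)
  show ?thesis
  proof
    show "?L \<subseteq> ?R"
    proof
      fix z assume "z \<in> ?L"
      then obtain j where j: "j < n" "gcd (P + int j * K) (int n) = int dn"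
        and z: "z = SL2Z_orbit (Complex (of_int (P + int j * K) / of_int (K * int n)) y)" by auto
      obtain j' where j': "0 \<le> j'" "j' < int n div int dn" "coprime j' (int n div int dn)"
        "SL2Z_orbit (Complex (of_int (P + int j * K) / of_int (K * int n)) y) =
         SL2Z_orbit (Complex (of_int c / of_int (K * (int n div int dn)) + of_int j' / of_int (int n div int dn))
                  (1 / ((of_int (K * (int n div int dn)))^2 * y)))"
        using A[OF j(2)] by blast
      have e1: "j' = int (nat j')" using j'(1) by simp
      have "nat j' < n div dn" using j'(1) j'(2)[unfolded nd] by (simp only: nat_less_iff)
      moreover have "coprime (int (nat j')) (int (n div dn))" using j'(3) e1 nd by simp
      then have "coprime (nat j') (n div dn)" by (simp only: coprime_int_iff)
      ultimately have "nat j' \<in> {j \<in> {0..<n div dn}. coprime j (n div dn)}" by simp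
      moreover have "z = SL2Z_orbit (Complex (of_int c / of_int (K * int (n div dn)) + real (nat j') / real (n div dn))
             (1 / ((of_int (K * int (n div dn)))^2 * y)))"
        unfolding z j'(4) nd by (subst e1) (simp only: of_int_of_nat_eq)
      ultimately show "z \<in> ?R" by blast
    qed
    show "?R \<subseteq> ?L"
    proof
      fix z assume "z \<in> ?R"
      then obtain j' where j': "j' < n div dn" "coprime j' (n div dn)"
        and z: "z = SL2Z_orbit (Complex (of_int c / of_int (K * int (n div dn)) + real j' / real (n div dn))
             (1 / ((of_int (K * int (n div dn)))^2 * y)))" by auto
      have "0 \<le> int j'" "int j' < int n div int dn" "coprime (int j') (int n div int dn)"
        using j' nd by (auto simp: coprime_int_iff)
      from B[OF this] obtain j where j: "0 \<le> j" "j < int n" "gcd (P + j * K) (int n) = int dn"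
        "SL2Z_orbit (Complex (of_int (P + j * K) / of_int (K * int n)) y) =
         SL2Z_orbit (Complex (of_int c / of_int (K * (int n div int dn)) + of_int (int j') / of_int (int n div int dn))
                  (1 / ((of_int (K * (int n div int dn)))^2 * y)))" by blast
      have "nat j \<in> {j \<in> {0..<n}. gcd (P + int j * K) (int n) = int dn}" using j by auto
      moreover have "z = SL2Z_orbit (Complex (of_int (P + int (nat j) * K) / of_int (K * int n)) y)"
      proof -
        have e2: "int (nat j) = j" using j(1) by simp
        show ?thesis unfolding z e2 j(4) nd by (simp only: of_int_of_nat_eq)
      qed
      ultimately show "z \<in> ?L" by blast
    qed
  qed
qed



lemma coprime_k_n:
  fixes n q :: nat
  assumes q: "q \<ge> 1" and n: "n \<ge> 1" and h: "gcd (n^2) q dvd n"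
  shows "coprime (q div gcd n q) n"
proof -
  define g where "g = gcd n q"
  define k where "k = q div g"
  define n1 where "n1 = n div g"
  have g: "g > 0" using n g_def by simp
  have qk: "q = g * k" unfolding k_def g_def by simp
  have nn: "n = g * n1" unfolding n1_def g_def by simp
  have c1: "coprime n1 k" unfolding n1_def k_def g_def using n by (intro div_gcd_coprime) simp
  define hh where "hh = gcd n k"
  have hk: "hh dvd k" and hn: "hh dvd n" unfolding hh_def by auto
  have chn1: "coprime hh n1" using c1 hk by (meson coprime_commute coprime_divisors dvd_refl)
  have "hh dvd g * n1" using hn nn by simp
  then have hg: "hh dvd g" using chn1 by (simp add: coprime_dvd_mult_left_iff)
  have "g * hh dvd n * n" using hn g_def by (simp add: mult_dvd_mono)
  then have "g * hh dvd n^2" by (simp add: power2_eq_square)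
  moreover have "g * hh dvd q" using hk qk by simp
  ultimately have "g * hh dvd gcd (n^2) q" by simp
  then have "g * hh dvd g * n1" using h nn by (metis dvd_trans)
  then have "hh dvd n1" using g by simp
  then have "is_unit hh" using chn1 coprime_absorb_left by blast
  then have "hh = 1" by simp
  then show ?thesis unfolding hh_def k_def g_def by (simp add: coprime_iff_gcd_eq_1 gcd.commute)
qed

lemma part2:
  fixes p a b inv :: int and q n :: nat and y :: real
  assumes q: "q \<ge> 1" and n: "n \<ge> 1" and cp: "coprime p (int q)" and g1: "gcd n q = 1"
    and ab: "a * int n + b * int q = 1" and inv: "[p * int n * inv = 1] (mod int q)" and y: "y > 0"
  shows "R_pr n (real_of_int p / real q) y =
         R_pr n (- real_of_int (inv * a) / real q) (1 / (real q ^ 2 * real n ^ 2 * y))"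
proof -
  define K where "K = int q"
  define P where "P = p * int n"
  define c where "c = - (inv * a * int n)"
  have cKN: "coprime K (int n)" unfolding K_def using g1 by (simp add: coprime_iff_gcd_eq_1 gcd.commute)
  have cPK: "coprime P K" unfolding P_def K_def using cp cKN K_def
    by (simp add: coprime_commute)
  have "[a * int n = 1] (mod int q)"
  proof -
    have "a * int n - 1 = int q * (- b)" using ab by (simp add: algebra_simps)
    then show ?thesis by (simp add: cong_iff_dvd_diff)
  qed
  then have "[(p * int n * inv) * (a * int n) = 1 * 1] (mod int q)" using inv by (intro cong_mult)
  then have "[- ((p * int n * inv) * (a * int n)) = - 1] (mod int q)" by (simp only: cong_minus_minus_iff) simp
  moreover have "c * P = - ((p * int n * inv) * (a * int n))" unfolding c_def P_def by (simp add: algebra_simps)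
  ultimately have cP: "[c * P = - int 1] (mod K)" unfolding K_def by simp
  have c0: "[c = 0] (mod int (n div 1))" unfolding c_def by (simp add: cong_0_iff)
  have K0: "K > 0" unfolding K_def using q by simp
  have CS: "(\<lambda>j. SL2Z_orbit (Complex (of_int (P + int j * K) / of_int (K * int n)) y)) `
           {j \<in> {0..<n}. gcd (P + int j * K) (int n) = int 1} =
         (\<lambda>j. SL2Z_orbit (Complex (of_int c / of_int (K * int (n div 1)) + real j / real (n div 1))
             (1 / ((of_int (K * int (n div 1)))^2 * y)))) ` {j \<in> {0..<n div 1}. coprime j (n div 1)}"
    using class_set[OF K0 _ cKN cPK _ _ cP c0 y] n by simp
  have S: "{j \<in> {0..<n}. gcd (P + int j * K) (int n) = int 1} = {j \<in> {0..<n}. coprime j n}"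
  proof -
    have "gcd (P + int j * K) (int n) = 1 \<longleftrightarrow> coprime j n" for j
    proof -
      have "gcd (P + int j * K) (int n) = gcd (int n) (p * int n + int j * K)"
        unfolding P_def by (simp add: gcd.commute)
      also have "\<dots> = gcd (int n) (int j * K)" by (rule gcd_add_mult)
      finally have "gcd (P + int j * K) (int n) = 1 \<longleftrightarrow> coprime (int n) (int j * K)"
        by (simp add: coprime_iff_gcd_eq_1)
      also have "\<dots> \<longleftrightarrow> coprime (int n) (int j)" using cKN by (simp add: coprime_commute)
      also have "\<dots> \<longleftrightarrow> coprime j n" by (simp add: coprime_commute)
      finally show ?thesis .
    qed
    then show ?thesis by simp
  qed
  have F: "of_int (P + int j * K) / of_int (K * int n) = real_of_int p / real q + real j / real n" for j
    unfolding P_def K_def using q n by (simp add: field_simps)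
  have X: "of_int c / of_int (K * int (n div 1)) = - real_of_int (inv * a) / real q"
    unfolding c_def K_def using q n by (simp add: field_simps)
  have H: "1 / ((of_int (K * int (n div 1)))^2 * y) = 1 / (real q ^ 2 * real n ^ 2 * y)"
    unfolding K_def by (simp add: power_mult_distrib)
  show ?thesis
    using CS unfolding R_pr_def S F X H by simp
qed

lemma part1:
  fixes p :: int and q n :: nat
  assumes q: "q \<ge> 1" and n: "n \<ge> 1" and cp: "coprime p (int q)" and h: "gcd (n^2) q dvd n"
  shows "\<exists>x :: nat \<Rightarrow> real. \<forall>y > 0.
            R_set n (real_of_int p / real q) y =
              (\<Union>d \<in> {d. d dvd n}.
                 R_pr (n div d) (x d)
                   (real d ^ 2 / (real (q div gcd n q) ^ 2 * real n ^ 2 * y)))"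
proof -
  define g where "g = gcd n q"
  define k where "k = q div g"
  define n1 where "n1 = n div g"
  define K where "K = int k"
  define P where "P = p * int n1"
  have g: "g > 0" using n g_def by simp
  have qk: "q = g * k" unfolding k_def g_def by simp
  have nn: "n = g * n1" unfolding n1_def g_def by simp
  have k0: "k > 0" using qk q by (cases k) auto
  have n10: "n1 > 0" using nn n by (cases n1) auto
  have K0: "K > 0" using k0 K_def by simp
  have c1: "coprime n1 k" unfolding n1_def k_def g_def using n by (intro div_gcd_coprime) simp
  have ckn: "coprime k n" using coprime_k_n[OF q n h] unfolding k_def g_def .
  have cKN: "coprime K (int n)" unfolding K_def using ckn by simp
  have "int k dvd int q" using qk by simp
  then have cpK: "coprime p K" using cp K_def by (meson coprime_commute coprime_divisors dvd_refl)
  have "coprime (int n1) K" using c1 K_def by simp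
  then have cPK: "coprime P K" using cpK P_def by simp
  define w where "w = (SOME w. [P * w = 1] (mod K))"
  have w: "[P * w = 1] (mod K)" unfolding w_def by (rule someI_ex) (rule cong_solve_coprime_int[OF cPK])
  define e where "e = (\<lambda>d::nat. SOME e. [int (n div d) * e = 1] (mod K))"
  have e: "[int (n div d) * e d = 1] (mod K)" if "d dvd n" for d
  proof -
    have "n div d dvd n" using that by (metis dvd_div_mult_self dvd_triv_left)
    then have "int (n div d) dvd int n" by (simp only: of_nat_dvd_iff)
    then have "coprime (int (n div d)) K" using cKN by (meson coprime_commute coprime_divisors dvd_refl)
    then show ?thesis unfolding e_def by (rule someI_ex[OF cong_solve_coprime_int])
  qed
  define cf where "cf = (\<lambda>d::nat. - (w * int d * e d * int (n div d)))"
  define x where "x = (\<lambda>d::nat. of_int (cf d) / of_int (K * int (n div d)) :: real)"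
  have cP: "[cf d * P = - int d] (mod K)" if "d dvd n" for d
  proof -
    have "[(P * w) * (int (n div d) * e d) = 1 * 1] (mod K)" using w e[OF that] by (rule cong_mult)
    then have "[- int d * ((P * w) * (int (n div d) * e d)) = - int d * (1 * 1)] (mod K)"
      by (rule cong_scalar_left)
    moreover have "cf d * P = - int d * ((P * w) * (int (n div d) * e d))"
      unfolding cf_def by (simp add: algebra_simps)
    ultimately show ?thesis by simp
  qed
  have c0: "[cf d = 0] (mod int (n div d))" for d unfolding cf_def by (simp add: cong_0_iff)
  show ?thesis
  proof (intro exI allI impI)
    fix y :: real assume y: "y > 0"
    define f where "f = (\<lambda>j::nat. SL2Z_orbit (Complex (of_int (P + int j * K) / of_int (K * int n)) y))"
    define S where "S = (\<lambda>d::nat. {j \<in> {0..<n}. gcd (P + int j * K) (int n) = int d})"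
    have F: "real_of_int p / real q + real j / real n = of_int (P + int j * K) / of_int (K * int n)" for j
    proof -
      have "real q = real g * real k" "real n = real g * real n1" using qk nn by simp_all
      then show ?thesis unfolding P_def K_def using g k0 n10 by (simp add: field_simps)
    qed
    have RS: "R_set n (real_of_int p / real q) y = f ` {0..<n}"
      unfolding R_set_def f_def F ..
    have U: "{0..<n} = (\<Union>d \<in> {d. d dvd n}. S d)"
    proof
      show "{0..<n} \<subseteq> (\<Union>d \<in> {d. d dvd n}. S d)"
      proof
        fix j assume j: "j \<in> {0..<n}"
        define d where "d = nat (gcd (P + int j * K) (int n))"
        have dd: "int d = gcd (P + int j * K) (int n)" unfolding d_def by simp
        have "int d dvd int n" unfolding dd by simp
        then have "d dvd n" by (simp only: of_nat_dvd_iff)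
        moreover have "j \<in> S d" unfolding S_def using j dd by simp
        ultimately show "j \<in> (\<Union>d \<in> {d. d dvd n}. S d)" by blast
      qed
    qed (auto simp: S_def)
    have E: "f ` S d = R_pr (n div d) (x d) (real d ^ 2 / (real (q div gcd n q) ^ 2 * real n ^ 2 * y))"
      if d: "d dvd n" for d
    proof -
      have d0: "d > 0" using d n by (cases d) auto
      have CS: "f ` S d = (\<lambda>j. SL2Z_orbit (Complex (of_int (cf d) / of_int (K * int (n div d)) + real j / real (n div d))
             (1 / ((of_int (K * int (n div d)))^2 * y)))) ` {j \<in> {0..<n div d}. coprime j (n div d)}"
        unfolding f_def S_def using class_set[OF K0 _ cKN cPK d0 d cP[OF d] c0 y] n by simp
      have H: "1 / ((of_int (K * int (n div d)))^2 * y) = real d ^ 2 / (real (q div gcd n q) ^ 2 * real n ^ 2 * y)"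
      proof -
        have nm: "n = d * (n div d)" using d by simp
        then have m0: "n div d > 0" using n by (cases "n div d") auto
        have nm': "real n = real d * real (n div d)" using nm by (metis of_nat_mult)
        show ?thesis unfolding K_def k_def[symmetric] g_def[symmetric] nm' using d0 y m0 k0
          by (simp add: field_simps power_mult_distrib)
      qed
      show ?thesis unfolding CS R_pr_def H x_def ..
    qed
    show "R_set n (real_of_int p / real q) y =
              (\<Union>d \<in> {d. d dvd n}.
                 R_pr (n div d) (x d)
                   (real d ^ 2 / (real (q div gcd n q) ^ 2 * real n ^ 2 * y)))"
      unfolding RS U image_UN using E by simp
  qed
qed


theorem proposition3p7:
  fixes p :: int and q n :: nat
  assumes "q \<ge> 1" and "n \<ge> 1" and "coprime p (int q)"
    and "gcd (n^2) q dvd n"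
  shows "(\<exists>x :: nat \<Rightarrow> real. \<forall>y > 0.
            R_set n (real_of_int p / real q) y =
              (\<Union>d \<in> {d. d dvd n}.
                 R_pr (n div d) (x d)
                   (real d ^ 2 / (real (q div gcd n q) ^ 2 * real n ^ 2 * y))))
       \<and> (gcd n q = 1 \<longrightarrow>
            (\<forall>a b inv :: int. \<forall>y :: real.
               a * int n + b * int q = 1 \<longrightarrow> [p * int n * inv = 1] (mod int q) \<longrightarrow> y > 0 \<longrightarrow>
               R_pr n (real_of_int p / real q) y =
               R_pr n (- real_of_int (inv * a) / real q) (1 / (real q ^ 2 * real n ^ 2 * y))))"
proof (intro conjI impI allI)
  show "\<exists>x :: nat \<Rightarrow> real. \<forall>y > 0.
            R_set n (real_of_int p / real q) y =
              (\<Union>d \<in> {d. d dvd n}.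
                 R_pr (n div d) (x d)
                   (real d ^ 2 / (real (q div gcd n q) ^ 2 * real n ^ 2 * y)))"
    by (rule part1[OF assms])
next
  fix a b inv :: int and y :: real
  assume "gcd n q = 1" "a * int n + b * int q = 1" "[p * int n * inv = 1] (mod int q)" "y > 0"
  then show "R_pr n (real_of_int p / real q) y =
               R_pr n (- real_of_int (inv * a) / real q) (1 / (real q ^ 2 * real n ^ 2 * y))"
    by (rule part2[OF assms(1,2,3)])
qed

end
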